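(* Let $a,b\in GF(q)\setminus\{0\}$ and let $\mu\in GF(q)$ satisfy $\mu^2=\frac ba\neq1$. For every point $P\in\mathcal B_a$ there are exactly two circles $g,h\in\tau(a,b)$ that are tangential to $\mathcal B_a$ in $P$. Moreover, $g$ is tangential to $\mathcal B_b$ in $\mu P$ and $h$ is tangential to $\mathcal B_b$ in $-\mu P$.
   Context: Let $p$ be an odd prime, $m\ge1$, and $q=p^m$. $GF(q^2)$ denotes the quadratic extension of $GF(q)$, and for $z\in GF(q^2)$ we write $\bar z:=z^{q}$. The Miquelian Möbius plane $\mathbb M(q)$ has point set $GF(q^2)\cup\{\infty\}$ and circles of two types: for $s\in GF(q^2)$ and $c\in GF(q)\setminus\{0\}$, the circle of the first type $\mathcal B^1_{(s,c)}=\{z\in GF(q^2):(z-s)(\bar z-\bar s)=c\}$; for $s\in GF(q^2)\setminus\{0\}$ and $c\in GF(q)$, the circle of the second type $\mathcal B^2_{(s,c)}=\{z\in GF(q^2):\bar s z+s\bar z=c\}\cup\{\infty\}$. Two circles are called tangential if they have exactly one point in common; a circle $g$ is tangential to a circle $\mathcal B$ in $P$ if $g\cap\mathcal B=\{P\}$. For $a\in GF(q)\setminus\{0\}$ put $\mathcal B_a:=\mathcal B^1_{(0,a)}$, and for $a,b\in GF(q)\setminus\{0\}$ let $\tau(a,b)$ be the set of circles tangential to both $\mathcal B_a$ and $\mathcal B_b$. *)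

theory Defs
  imports Main "HOL-Computational_Algebra.Primes"
begin

text \<open>GF(q^2) is modelled as a finite field type 'a with CARD('a) = q^2.
  Points of the Moebius plane: 'a option, None = infinity, Some z = z.\<close>

definition conjq :: "nat \<Rightarrow> 'a::field \<Rightarrow> 'a" where
  "conjq q z = z ^ q"

definition GFsub :: "nat \<Rightarrow> 'a::field set" where
  "GFsub q = {x. x ^ q = x}"

definition circle1 :: "nat \<Rightarrow> 'a::field \<Rightarrow> 'a \<Rightarrow> 'a option set" where
  "circle1 q s c = {Some z | z. (z - s) * (conjq q z - conjq q s) = c}"

definition circle2 :: "nat \<Rightarrow> 'a::field \<Rightarrow> 'a \<Rightarrow> 'a option set" where
  "circle2 q s c = insert None {Some z | z. conjq q s * z + s * conjq q z = c}"

definition is_circle :: "nat \<Rightarrow> 'a::field option set \<Rightarrow> bool" where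
  "is_circle q g \<longleftrightarrow>
     (\<exists>s c. c \<in> GFsub q \<and> c \<noteq> 0 \<and> g = circle1 q s c) \<or>
     (\<exists>s c. s \<noteq> 0 \<and> c \<in> GFsub q \<and> g = circle2 q s c)"

definition tangential :: "'a option set \<Rightarrow> 'a option set \<Rightarrow> bool" where
  "tangential g B \<longleftrightarrow> (\<exists>P. g \<inter> B = {P})"

definition tangent_at :: "'a option set \<Rightarrow> 'a option set \<Rightarrow> 'a option \<Rightarrow> bool" where
  "tangent_at g B P \<longleftrightarrow> g \<inter> B = {P}"

definition Bcirc :: "nat \<Rightarrow> 'a::field \<Rightarrow> 'a option set" where
  "Bcirc q a = circle1 q 0 a"

definition tau :: "nat \<Rightarrow> 'a::field \<Rightarrow> 'a \<Rightarrow> 'a option set set" where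
  "tau q a b = {g. is_circle q g \<and> tangential g (Bcirc q a) \<and> tangential g (Bcirc q b)}"

end

theory Submission
  imports Defs "HOL-Number_Theory.Residues"
begin


lemma ff_power_card_same:
  fixes x :: "'a :: {field,finite}"
  shows "x ^ card (UNIV :: 'a set) = x"
proof (cases "x = 0")
  case False
  have "x * (\<Prod>y\<in>UNIV-{0}. x * y) = x * x ^ (card (UNIV :: 'a set) - 1) * \<Prod>(UNIV-{0})"
    by (simp add: prod.distrib mult_ac)
  also have "x * x ^ (card (UNIV :: 'a set) - 1) = x ^ Suc (card (UNIV :: 'a set) - 1)"
    by (subst power_Suc) auto
  also have "Suc (card (UNIV :: 'a set) - 1) = card (UNIV :: 'a set)"
    using finite_UNIV_card_ge_0[where ?'a = 'a] by simp
  also have "(\<Prod>y\<in>UNIV-{0}. x * y) = (\<Prod>y\<in>UNIV-{0}. y)"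
    by (rule prod.reindex_bij_witness[of _ "\<lambda>y. y / x" "\<lambda>y. x * y"]) (use False in auto)
  finally show ?thesis
    by simp
qed (use finite_UNIV_card_ge_0[where ?'a = 'a] in auto)

lemma char_facts:
  fixes p m q :: nat
  assumes "prime p" "odd p" "m \<ge> 1" "q = p ^ m" "card (UNIV :: 'a::{field,finite} set) = q ^ 2"
  shows "(\<forall>x y :: 'a. (x+y)^q = x^q + y^q) \<and> (\<forall>x::'a. (x^q)^q = x) \<and> (2::'a) \<noteq> 0"
proof -
  have cpos: "CHAR('a) > 0" by (rule finite_imp_CHAR_pos) simp
  have cpr: "prime CHAR('a)" using prime_CHAR_semidom[OF cpos] .
  have "CHAR('a) dvd p ^ (m*2)" using CHAR_dvd_CARD[where 'a='a] assms(4,5)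
    by (simp add: power_mult)
  hence "CHAR('a) dvd p" using prime_dvd_power cpr by blast
  hence cp: "CHAR('a) = p" using primes_dvd_imp_eq cpr assms(1) by blast
  have A: "\<forall>x y :: 'a. (x+y)^q = x^q + y^q"
    using freshmans_dream'[of q m] cp cpr assms(4) by auto
  have B: "\<forall>x::'a. (x^q)^q = x"
  proof
    fix x :: 'a
    have "(x^q)^q = x ^ (q^2)" by (simp only: power_mult[symmetric] power2_eq_square)
    also have "\<dots> = x ^ card (UNIV :: 'a set)" using assms(5) by simp
    finally show "(x^q)^q = x" using ff_power_card_same by simp
  qed
  have "\<not> p dvd 2"
  proof
    assume "p dvd 2" hence "p \<le> 2" by (simp add: dvd_imp_le)
    moreover have "p \<ge> 2" using assms(1) prime_ge_2_nat by blast
    ultimately have "p = 2" by simp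
    thus False using assms(2) by simp
  qed
  moreover have "of_nat 2 = (0::'a) \<longleftrightarrow> CHAR('a) dvd 2" by (rule of_nat_eq_0_iff_char_dvd)
  ultimately have "of_nat 2 \<noteq> (0::'a)" using cp by simp
  hence C: "(2::'a) \<noteq> 0" by simp
  show ?thesis using A B C by blast
qed




lemma R1: fixes w::"'x::comm_ring_1"
  assumes "(w - t*z)*(W - t*Z) = (1-t)^2*c" "w*W = b" "z*Z = c"
  shows "t*(z*W + Z*w) = b - c + 2*t*c"
proof -
  have "(w - t*z)*(W - t*Z) = w*W - t*(z*W + Z*w) + t^2*(z*Z)" by (simp add: algebra_simps power2_eq_square)
  hence "b - t*(z*W + Z*w) + t^2*c = (1-t)^2*c" using assms by simp
  also have "(1-t)^2*c = c - 2*t*c + t^2*c" by (simp add: algebra_simps power2_eq_square)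
  finally have e: "b - t*(z*W + Z*w) + t^2*c = c - 2*t*c + t^2*c" .
  have "t*(z*W + Z*w) = b - (b - t*(z*W + Z*w) + t^2*c) + t^2*c" by (simp add: algebra_simps)
  also have "\<dots> = b - (c - 2*t*c + t^2*c) + t^2*c" using e by simp
  also have "\<dots> = b - c + 2*t*c" by (simp add: algebra_simps)
  finally show ?thesis .
qed
lemma R2: "w*W = b \<Longrightarrow> z*Z = c \<Longrightarrow> (Z*w)*(z*W) = (c*b::'x::comm_ring_1)"
  by (metis mult.commute mult.left_commute)
lemma R3: "z*Z = c \<Longrightarrow> (z - t*z)*(Z - t*Z) = (1-t)^2*(c::'x::comm_ring_1)"
proof -
  have "(z - t*z)*(Z - t*Z) = (1-t)^2*(z*Z)" by (simp add: algebra_simps power2_eq_square)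
  thus "z*Z = c \<Longrightarrow> ?thesis" by simp
qed
lemma R4: "z*Z = c \<Longrightarrow> 2*t = 1+n \<Longrightarrow> (n*z - t*z)*(n*Z - t*Z) = (1-t)^2*(c::'x::comm_ring_1)"
proof -
  assume h: "z*Z = c" "2*t = 1+n"
  have n: "n = 2*t - 1" using h(2) by (simp add: algebra_simps)
  have "(n*z - t*z)*(n*Z - t*Z) = (n-t)^2*(z*Z)" by (simp add: algebra_simps power2_eq_square)
  also have "(n - t)^2 = (1-t)^2" unfolding n by (simp add: algebra_simps power2_eq_square)
  finally show ?thesis using h by simp
qed
lemma R5: "z*Z = c \<Longrightarrow> b = n^2*c \<Longrightarrow> (n*z)*(n*Z) = (b::'x::comm_ring_1)"
proof -
  have "(n*z)*(n*Z) = n^2*(z*Z)" by (simp add: algebra_simps power2_eq_square)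
  thus "z*Z = c \<Longrightarrow> b = n^2*c \<Longrightarrow> ?thesis" by simp
qed
lemma R6: fixes t :: "'x::field"
  assumes "2*t*v = b - c + 2*t*c" "v^2 = c*b" "b = m^2*c" "(2::'x) \<noteq> 0"
  shows "c^2*((m-1)*(m+1-2*t)*(m+1)*(m-1+2*t)) = 0"
proof -
  have "(2*t*v)^2 = 4*t^2*(c*b)" using assms(2) by (simp add: power_mult_distrib)
  hence "(b - c + 2*t*c)^2 = 4*t^2*(c*b)" using assms(1) by simp
  hence "(m^2*c - c + 2*t*c)^2 - 4*t^2*(c*(m^2*c)) = 0" using assms(3) by simp
  moreover have "(m^2*c - c + 2*t*c)^2 - 4*t^2*(c*(m^2*c)) = c^2*((m-1)*(m+1-2*t)*(m+1)*(m-1+2*t))"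
    by (simp add: algebra_simps power2_eq_square)
  ultimately show ?thesis by simp
qed

context
  fixes q :: nat
  assumes fadd: "\<And>x y :: 'a::field. (x+y)^q = x^q + y^q"
  and finv: "\<And>x :: 'a. (x^q)^q = x"
  and two: "(2::'a) \<noteq> 0"
begin

lemma q_pos: "q > 0"
proof (rule ccontr)
  assume "\<not> q > 0" hence "q = 0" by simp
  with fadd[of 0 0] have "(1::'a) = 1 + 1" by simp
  thus False by (metis add_cancel_right_right zero_neq_one)
qed

lemma f0 [simp]: "(0::'a)^q = 0" using q_pos by simp

lemma fminus [simp]: "(-x::'a)^q = -(x^q)"
proof -
  have "(x + -x)^q = x^q + (-x)^q" by (rule fadd)
  thus ?thesis by (simp add: eq_neg_iff_add_eq_0 add.commute)
qed

lemma fdiff [simp]: "(x - y::'a)^q = x^q - y^q"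
  using fadd[of x "-y"] by simp

lemma f2 [simp]: "(2::'a)^q = 2"
  using fadd[of 1 1] by (simp add: one_add_one)

lemma fzero [simp]: "(x::'a)^q = 0 \<longleftrightarrow> x = 0"
  using q_pos by simp

lemma L1:
  fixes v r :: 'a
  assumes "v + v^q = 2*r" "v * v^q = r^2" "r^q = r"
  shows "v = r"
proof -
  have "(v - r) * (v^q - r) = v * v^q - r * (v + v^q) + r^2"
    by (simp add: algebra_simps power2_eq_square)
  also have "\<dots> = 0" using assms by (simp add: power2_eq_square)
  finally have "v - r = 0 \<or> v^q - r = 0" by simp
  thus ?thesis
  proof
    assume "v^q - r = 0"
    hence "(v^q)^q = r^q" by simp
    thus ?thesis using finv assms(3) by simp
  qed simp
qed

lemma mem_c1: "Some (w::'a) \<in> circle1 q s c \<longleftrightarrow> (w - s) * (w^q - s^q) = c"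
  by (auto simp: circle1_def conjq_def)
lemma None_c1: "None \<notin> circle1 q (s::'a) c"
  by (auto simp: circle1_def)
lemma mem_c2: "Some (w::'a) \<in> circle2 q s c \<longleftrightarrow> s^q * w + s * w^q = c"
  by (auto simp: circle2_def conjq_def)
lemma mem_B: "Some (w::'a) \<in> Bcirc q a \<longleftrightarrow> w * w^q = a"
  by (simp add: Bcirc_def mem_c1)
lemma None_B: "None \<notin> Bcirc q (a::'a)"
  by (simp add: Bcirc_def None_c1)

lemma swq: "s \<noteq> 0 \<Longrightarrow> (s * w^q / s^q)^q = s^q * w / (s::'a)"
  by (simp add: power_mult_distrib power_divide finv)

lemma sw_B: "s \<noteq> 0 \<Longrightarrow> Some w \<in> Bcirc q a \<Longrightarrow> Some (s * w^q / s^q) \<in> Bcirc q (a::'a)"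
  unfolding mem_B swq by (simp add: field_simps)

lemma sw_c1: assumes "s \<noteq> 0" "Some w \<in> circle1 q s c" shows "Some (s * w^q / s^q) \<in> circle1 q s (c::'a)"
proof -
  have sq: "s^q \<noteq> 0" using assms(1) by simp
  have e1: "s*w^q/s^q - s = s*(w^q - s^q)/s^q" using sq by (simp add: field_simps)
  have e2: "s^q*w/s - s^q = s^q*(w - s)/s" using assms(1) by (simp add: field_simps)
  have "(s*w^q/s^q - s) * (s^q*w/s - s^q) = (w - s) * (w^q - s^q)"
    unfolding e1 e2 using sq assms(1) by (simp add: field_simps)
  thus ?thesis using assms unfolding mem_c1 swq[OF assms(1)] by simp
qed

lemma sw_c2: "s \<noteq> 0 \<Longrightarrow> Some w \<in> circle2 q s c \<Longrightarrow> Some (s * w^q / s^q) \<in> circle2 q s (c::'a)"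
  unfolding mem_c2 swq by (simp add: field_simps)

lemma sw_single:
  assumes "X \<inter> Y = {Some w0}" "\<And>w. Some w \<in> X \<Longrightarrow> Some (s * w^q / s^q) \<in> X"
    "\<And>w. Some w \<in> Y \<Longrightarrow> Some (s * w^q / s^q) \<in> Y" "s \<noteq> 0"
  shows "s * w0^q = s^q * (w0::'a)"
proof -
  have "Some (s * w0^q / s^q) \<in> X \<inter> Y" using assms by blast
  hence "s * w0^q / s^q = w0" using assms(1) by auto
  thus ?thesis using assms(4) by (simp add: field_simps)
qed

lemma fsq [simp]: "((x::'a)^2)^q = (x^q)^2"
  by (simp add: power2_eq_square power_mult_distrib)

lemma fwd:
  fixes a b \<nu> z :: 'a
  assumes aq: "a^q = a" and a0: "a \<noteq> 0" and nq: "\<nu>^q = \<nu>" and nb: "\<nu>^2 = b/a"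
    and n1: "\<nu> \<noteq> 1" and n2: "\<nu> \<noteq> -1" and za: "z*z^q = a"
  shows "is_circle q (circle1 q ((1+\<nu>)/2*z) ((1-(1+\<nu>)/2)^2*a))"
    and "circle1 q ((1+\<nu>)/2*z) ((1-(1+\<nu>)/2)^2*a) \<inter> Bcirc q a = {Some z}"
    and "circle1 q ((1+\<nu>)/2*z) ((1-(1+\<nu>)/2)^2*a) \<inter> Bcirc q b = {Some (\<nu>*z)}"
proof -
  define t where "t = (1+\<nu>)/2"
  have t2: "2*t = 1+\<nu>" using two by (simp add: t_def)
  have tq: "t^q = t" using nq by (simp add: t_def power_divide fadd)
  have t0: "t \<noteq> 0" using n2 t2 by (metis add.commute add_eq_0_iff mult_zero_right)
  have t1: "1 - t \<noteq> 0"
  proof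
    assume "1 - t = 0" hence "t = 1" by simp
    hence "\<nu> = 1" using t2 by simp
    thus False using n1 by simp
  qed
  have bb: "b = \<nu>^2*a" using nb a0 by simp
  have z0: "z \<noteq> 0" using za a0 by auto
  have zq0: "z^q \<noteq> 0" using z0 by simp
  have memG: "Some w \<in> circle1 q (t*z) ((1-t)^2*a) \<longleftrightarrow> (w - t*z)*(w^q - t*z^q) = (1-t)^2*a" for w
    by (simp add: mem_c1 power_mult_distrib tq)
  show "is_circle q (circle1 q ((1+\<nu>)/2*z) ((1-(1+\<nu>)/2)^2*a))"
    unfolding is_circle_def t_def[symmetric]
    by (rule disjI1, rule exI[of _ "t*z"], rule exI[of _ "(1-t)^2*a"])
       (use t1 a0 tq aq in \<open>simp add: GFsub_def power_mult_distrib\<close>)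
  show "circle1 q ((1+\<nu>)/2*z) ((1-(1+\<nu>)/2)^2*a) \<inter> Bcirc q a = {Some z}"
    unfolding t_def[symmetric]
  proof (intro equalityI subsetI)
    fix P assume P: "P \<in> circle1 q (t*z) ((1-t)^2*a) \<inter> Bcirc q a"
    then obtain w where Pw: "P = Some w" using None_B by (cases P) auto
    have h1: "(w - t*z)*(w^q - t*z^q) = (1-t)^2*a" and h2: "w*w^q = a"
      using P Pw memG mem_B by auto
    have "t*(z*w^q + z^q*w) = t*(2*a)" using R1[OF h1 h2 za] by simp
    hence h3: "z^q*w + (z^q*w)^q = 2*a" using t0 by (simp add: power_mult_distrib finv add.commute)
    have h4: "(z^q*w) * (z^q*w)^q = a^2" using R2[OF h2 za]
      by (simp add: power_mult_distrib finv power2_eq_square)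
    have "z^q*w = a" by (rule L1[OF h3 h4 aq])
    hence "z^q*w = z^q*z" using za by (simp add: mult.commute)
    hence "w = z" using z0 q_pos by auto
    thus "P \<in> {Some z}" using Pw by simp
  next
    fix P assume "P \<in> {Some z}"
    hence "P = Some z" by simp
    moreover have "(z - t*z)*(z^q - t*z^q) = (1-t)^2*a" using R3[OF za] .
    ultimately show "P \<in> circle1 q (t*z) ((1-t)^2*a) \<inter> Bcirc q a"
      using memG mem_B za by auto
  qed
  show "circle1 q ((1+\<nu>)/2*z) ((1-(1+\<nu>)/2)^2*a) \<inter> Bcirc q b = {Some (\<nu>*z)}"
    unfolding t_def[symmetric]
  proof (intro equalityI subsetI)
    fix P assume P: "P \<in> circle1 q (t*z) ((1-t)^2*a) \<inter> Bcirc q b"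
    then obtain w where Pw: "P = Some w" using None_B by (cases P) auto
    have h1: "(w - t*z)*(w^q - t*z^q) = (1-t)^2*a" and h2: "w*w^q = b"
      using P Pw memG mem_B by auto
    have "b - a + 2*t*a = \<nu>^2*a - a + (2*t)*a" by (simp add: bb algebra_simps)
    also have "\<dots> = \<nu>^2*a - a + (1+\<nu>)*a" by (simp add: t2)
    also have "\<dots> = (1+\<nu>)*(a*\<nu>)" by (simp add: algebra_simps power2_eq_square)
    also have "\<dots> = (2*t)*(a*\<nu>)" by (simp add: t2)
    finally have "t*(z*w^q + z^q*w) = t*(2*(a*\<nu>))" using R1[OF h1 h2 za] by simp
    hence h3: "z^q*w + (z^q*w)^q = 2*(a*\<nu>)" using t0 by (simp add: power_mult_distrib finv add.commute)
    have h4: "(z^q*w) * (z^q*w)^q = (a*\<nu>)^2" using R2[OF h2 za] bb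
      by (simp add: power_mult_distrib finv power2_eq_square mult_ac)
    have "z^q*w = a*\<nu>" by (rule L1[OF h3 h4]) (simp add: power_mult_distrib aq nq)
    hence "z^q*w = z^q*(\<nu>*z)" using za by (simp add: mult_ac)
    hence "w = \<nu>*z" using z0 q_pos by auto
    thus "P \<in> {Some (\<nu>*z)}" using Pw by simp
  next
    fix P assume "P \<in> {Some (\<nu>*z)}"
    hence "P = Some (\<nu>*z)" by simp
    moreover have "(\<nu>*z - t*z)*((\<nu>*z)^q - t*z^q) = (1-t)^2*a"
      using R4[OF za t2] by (simp add: power_mult_distrib nq)
    moreover have "(\<nu>*z)*(\<nu>*z)^q = b" using R5[OF za bb]
      by (simp add: power_mult_distrib nq)
    ultimately show "P \<in> circle1 q (t*z) ((1-t)^2*a) \<inter> Bcirc q b"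
      using memG mem_B by auto
  qed
qed


lemma conv:
  fixes a b \<mu> z :: 'a
  assumes aq: "a^q = a" and a0: "a \<noteq> 0" and mq: "\<mu>^q = \<mu>"
    and mb: "\<mu>^2 = b/a" and ba: "b/a \<noteq> 1" and za: "z*z^q = a"
    and k: "k \<in> tau q a b" and kt: "k \<inter> Bcirc q a = {Some z}"
  shows "k = circle1 q ((1+\<mu>)/2*z) ((1-(1+\<mu>)/2)^2*a) \<or> k = circle1 q ((1+ -\<mu>)/2*z) ((1-(1+ -\<mu>)/2)^2*a)"
proof -
  have bb: "b = \<mu>^2*a" using mb a0 by simp
  have ab: "a \<noteq> b" using ba a0 by auto
  have z0: "z \<noteq> 0" using za a0 by auto
  have kc: "is_circle q k" and ktb: "tangential k (Bcirc q b)" using k by (auto simp: tau_def)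
  from ktb obtain P where P: "k \<inter> Bcirc q b = {P}" by (auto simp: tangential_def)
  have "P \<in> Bcirc q b" using P by blast
  then obtain w0 where Pw: "P = Some w0" using None_B by (cases P) auto
  have hw0: "w0*w0^q = b" and w0k: "Some w0 \<in> k" using P Pw mem_B by auto
  have zk: "Some z \<in> k" using kt by auto
  have P': "k \<inter> Bcirc q b = {Some w0}" using P Pw by simp
  have key: "\<exists>t. t^q = t \<and> s = t*z" if "s \<noteq> 0" "s*z^q = s^q*z" for s
  proof -
    define t where "t = s/z"
    have "t^q = s^q/z^q" by (simp add: t_def power_divide)
    also have "\<dots> = s/z" using that z0 q_pos by (simp add: field_simps)
    finally show ?thesis using z0 by (auto simp: t_def)
  qed
  have m1: "\<mu> - 1 \<noteq> 0"
  proof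
    assume "\<mu> - 1 = 0" hence "\<mu> = 1" by simp
    thus False using mb ba by simp
  qed
  have m2: "\<mu> + 1 \<noteq> 0"
  proof
    assume "\<mu> + 1 = 0" hence "\<mu> = -1" by (simp add: eq_neg_iff_add_eq_0)
    thus False using mb ba by simp
  qed
  from kc show ?thesis unfolding is_circle_def
  proof (elim disjE exE conjE)
    fix s c assume cq: "c \<in> GFsub q" "c \<noteq> 0" and ks: "k = circle1 q s c"
    show ?thesis
    proof (cases "s = 0")
      case True
      have "z * z^q = c" using zk ks True by (simp add: mem_c1)
      hence "c = a" using za by simp
      hence "w0 * w0^q = a" using w0k ks True by (simp add: mem_c1)
      thus ?thesis using hw0 ab by simp
    next
      case False
      have sw: "s*z^q = s^q*z"
        by (rule sw_single[OF kt]) (use ks sw_c1[OF False] sw_B[OF False] False in auto)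
      obtain t where tq: "t^q = t" and st: "s = t*z" using key[OF False sw] by auto
      have t0: "t \<noteq> 0" using False st by auto
      have cc: "c = (1-t)^2*a" using zk ks st R3[OF za, of t] by (simp add: mem_c1 power_mult_distrib tq)
      have sw2: "s*w0^q = s^q*w0"
        by (rule sw_single[OF P']) (use ks sw_c1[OF False] sw_B[OF False] False in auto)
      hence H1: "z*w0^q = z^q*w0" using st t0 by (simp add: power_mult_distrib tq)
      have h1: "(w0 - t*z)*(w0^q - t*z^q) = (1-t)^2*a"
        using w0k ks st cc by (simp add: mem_c1 power_mult_distrib tq)
      have e1: "t*(z*w0^q + z^q*w0) = b - a + 2*t*a" by (rule R1[OF h1 hw0 za])
      have e2: "2*t*(z^q*w0) = b - a + 2*t*a" using e1 H1 by (simp add: algebra_simps)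
      have e3: "(z^q*w0)^2 = a*b" using R2[OF hw0 za] H1 by (simp add: power2_eq_square)
      have "a^2*((\<mu>-1)*(\<mu>+1-2*t)*(\<mu>+1)*(\<mu>-1+2*t)) = 0" by (rule R6[OF e2 e3 bb two])
      hence "\<mu>+1-2*t = 0 \<or> \<mu>-1+2*t = 0" using a0 m1 m2 by simp
      thus ?thesis
      proof
        assume "\<mu>+1-2*t = 0" hence tt: "t = (1+\<mu>)/2" using two by (simp add: field_simps)
        show ?thesis by (rule disjI1) (simp only: ks st cc tt)
      next
        assume "\<mu>-1+2*t = 0" hence tt: "t = (1+ -\<mu>)/2" using two by (simp add: field_simps)
        show ?thesis by (rule disjI2) (simp only: ks st cc tt)
      qed
    qed
  next
    fix s c assume s0: "s \<noteq> 0" and cq: "c \<in> GFsub q" and ks: "k = circle2 q s c"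
    have sw: "s*z^q = s^q*z"
      by (rule sw_single[OF kt]) (use ks sw_c2[OF s0] sw_B[OF s0] s0 in auto)
    obtain t where tq: "t^q = t" and st: "s = t*z" using key[OF s0 sw] by auto
    have t0: "t \<noteq> 0" using s0 st by auto
    have sw2: "s*w0^q = s^q*w0"
      by (rule sw_single[OF P']) (use ks sw_c2[OF s0] sw_B[OF s0] s0 in auto)
    hence H1: "z*w0^q = z^q*w0" using st t0 by (simp add: power_mult_distrib tq)
    have l1: "s^q*w0 + s*w0^q = c" and l2: "s^q*z + s*z^q = c" using w0k zk ks mem_c2 by auto
    have "t*(2*(z^q*w0)) = s^q*w0 + s*w0^q"
      using st H1 by (simp add: power_mult_distrib tq algebra_simps)
    also have "\<dots> = s^q*z + s*z^q" using l1 l2 by simp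
    also have "\<dots> = t*(2*a)" using st za by (simp add: power_mult_distrib tq algebra_simps)
    finally have "z^q*w0 = a" using t0 two by simp
    hence "a*a = a*b" using R2[OF hw0 za] H1 by simp
    thus ?thesis using ab a0 by simp
  qed
qed

end

theorem mainTheorem5:
  fixes p m q :: nat and a b \<mu> z :: "'a::{field,finite}"
  assumes "prime p" and "odd p" and "m \<ge> 1" and "q = p ^ m"
    and "card (UNIV :: 'a set) = q ^ 2"
    and "a \<in> GFsub q" and "a \<noteq> 0" and "b \<in> GFsub q" and "b \<noteq> 0"
    and "\<mu> \<in> GFsub q" and "\<mu> ^ 2 = b / a" and "b / a \<noteq> 1"
    and "Some z \<in> Bcirc q a"
  shows "\<exists>g h. g \<noteq> h \<and>
           {k \<in> tau q a b. tangent_at k (Bcirc q a) (Some z)} = {g, h} \<and>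
           tangent_at g (Bcirc q b) (Some (\<mu> * z)) \<and>
           tangent_at h (Bcirc q b) (Some (- \<mu> * z))"
proof -
  have CF: "(\<forall>x y :: 'a. (x+y)^q = x^q + y^q) \<and> (\<forall>x::'a. (x^q)^q = x) \<and> (2::'a) \<noteq> 0"
    using char_facts[OF assms(1-5)] .
  have FA: "\<And>x y :: 'a. (x+y)^q = x^q + y^q" using CF by blast
  have FI: "\<And>x :: 'a. (x^q)^q = x" using CF by blast
  have TW: "(2::'a) \<noteq> 0" using CF by blast
  have aq: "a^q = a" and mq: "\<mu>^q = \<mu>" using assms(6,10) by (auto simp: GFsub_def)
  have za: "z*z^q = a" using assms(13) mem_B[OF FA FI TW] by blast
  have mqm: "(-\<mu>)^q = -\<mu>" using fminus[OF FA FI TW] mq by simp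
  have m1: "\<mu> \<noteq> 1" using assms(11,12) by auto
  have m2: "\<mu> \<noteq> -1" using assms(11,12) by auto
  have m0: "\<mu> \<noteq> 0" using assms(7,9,11) by auto
  have z0: "z \<noteq> 0" using za assms(7) by auto
  define g where "g = circle1 q ((1+\<mu>)/2*z) ((1-(1+\<mu>)/2)^2*a)"
  define h where "h = circle1 q ((1+ -\<mu>)/2*z) ((1-(1+ -\<mu>)/2)^2*a)"
  note G = fwd[OF FA FI TW aq assms(7) mq assms(11) m1 m2 za, folded g_def]
  have nb': "(-\<mu>)^2 = b/a" using assms(11) by simp
  have n1': "-\<mu> \<noteq> 1" using m2 by (metis minus_minus)
  have n2': "-\<mu> \<noteq> -1" using m1 by simp
  note Hc = fwd[OF FA FI TW aq assms(7) mqm nb' n1' n2' za, folded h_def]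
  have gt: "g \<in> tau q a b" using G by (auto simp: tau_def tangential_def)
  have ht: "h \<in> tau q a b" using Hc by (auto simp: tau_def tangential_def)
  have ne: "g \<noteq> h"
  proof
    assume "g = h"
    hence "\<mu>*z = -\<mu>*z" using G(3) Hc(3) by auto
    hence "2*(\<mu>*z) = 0" by (simp add: algebra_simps)
    thus False using TW m0 z0 by simp
  qed
  have "{k \<in> tau q a b. tangent_at k (Bcirc q a) (Some z)} = {g, h}"
  proof (intro equalityI subsetI)
    fix k assume "k \<in> {k \<in> tau q a b. tangent_at k (Bcirc q a) (Some z)}"
    hence "k \<in> tau q a b" "k \<inter> Bcirc q a = {Some z}" by (auto simp: tangent_at_def)
    from conv[OF FA FI TW aq assms(7) mq assms(11,12) za this] show "k \<in> {g, h}"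
      unfolding g_def h_def by blast
  next
    fix k assume "k \<in> {g, h}"
    thus "k \<in> {k \<in> tau q a b. tangent_at k (Bcirc q a) (Some z)}"
      using gt ht G(2) Hc(2) by (auto simp: tangent_at_def)
  qed
  moreover have "tangent_at g (Bcirc q b) (Some (\<mu> * z))" using G(3) by (simp add: tangent_at_def)
  moreover have "tangent_at h (Bcirc q b) (Some (- \<mu> * z))" using Hc(3) by (simp add: tangent_at_def)
  ultimately show ?thesis using ne by blast
qed

end
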